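(* Let $G$ be a group and let $k\ge 0$ be an integer. The core quandle $Core(G)$ is $(2k+1)$-stable if and only if every element of $G$ satisfies $g^2=1$; in other words, $G$ is isomorphic to $\bigoplus_{i\in I}\mathbb{Z}_2$ for some (finite or infinite) set $I$.
   Context: The core quandle $Core(G)$ of a group $G$ is the set $G$ with operation $g\rhd h:=hg^{-1}h$. For elements $u_1,\ldots,u_n$ of a rack $X$ write $x\rhd(u_i)_{i=1}^n:=(\cdots((x\rhd u_1)\rhd u_2)\cdots)\rhd u_n$. A stabilizing family of order $n$ for $X$ is a finite family $(u_1,\ldots,u_n)$ of elements of $X$ such that $x\rhd(u_i)_{i=1}^n=x$ for all $x\in X$; $X$ is $n$-stable if it has a stabilizing family of order $n$. *)

theory Defs
  imports "HOL-Algebra.Group"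
begin

definition core_op :: "('a, 'b) monoid_scheme \<Rightarrow> 'a \<Rightarrow> 'a \<Rightarrow> 'a" where
  "core_op G g h = h \<otimes>\<^bsub>G\<^esub> inv\<^bsub>G\<^esub> g \<otimes>\<^bsub>G\<^esub> h"

definition rack_iter :: "('a \<Rightarrow> 'a \<Rightarrow> 'a) \<Rightarrow> 'a \<Rightarrow> 'a list \<Rightarrow> 'a" where
  "rack_iter op x us = foldl op x us"

definition stabilizing_family :: "'a set \<Rightarrow> ('a \<Rightarrow> 'a \<Rightarrow> 'a) \<Rightarrow> nat \<Rightarrow> 'a list \<Rightarrow> bool" where
  "stabilizing_family X op n us \<longleftrightarrow>
     length us = n \<and> set us \<subseteq> X \<and> (\<forall>x\<in>X. rack_iter op x us = x)"

definition n_stable :: "'a set \<Rightarrow> ('a \<Rightarrow> 'a \<Rightarrow> 'a) \<Rightarrow> nat \<Rightarrow> bool" where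
  "n_stable X op n \<longleftrightarrow> (\<exists>us. stabilizing_family X op n us)"

definition core_n_stable :: "('a, 'b) monoid_scheme \<Rightarrow> nat \<Rightarrow> bool" where
  "core_n_stable G n = n_stable (carrier G) (core_op G) n"

end

theory Submission
  imports Defs
begin

lemma (in group) fold_form:
  assumes "set us \<subseteq> carrier G"
  shows "\<exists>A\<in>carrier G. \<exists>B\<in>carrier G. \<forall>x\<in>carrier G.
     foldl (core_op G) x us = (if even (length us) then A \<otimes> x \<otimes> B else A \<otimes> inv x \<otimes> B)"
  using assms
proof (induction us rule: rev_induct)
  case Nil
  show ?case by (rule bexI[of _ \<one>], rule bexI[of _ \<one>]) auto
next
  case (snoc u us)
  then have u: "u \<in> carrier G" and IH: "\<exists>A\<in>carrier G. \<exists>B\<in>carrier G. \<forall>x\<in>carrier G.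
     foldl (core_op G) x us = (if even (length us) then A \<otimes> x \<otimes> B else A \<otimes> inv x \<otimes> B)" by auto
  then obtain A B where A: "A \<in> carrier G" and B: "B \<in> carrier G" and h: "\<forall>x\<in>carrier G.
     foldl (core_op G) x us = (if even (length us) then A \<otimes> x \<otimes> B else A \<otimes> inv x \<otimes> B)" by blast
  show ?case
  proof (cases "even (length us)")
    case True
    show ?thesis
    proof (rule bexI[of _ "u \<otimes> inv B"], rule bexI[of _ "inv A \<otimes> u"], intro ballI)
      fix x assume x: "x \<in> carrier G"
      have "foldl (core_op G) x (us @ [u]) = u \<otimes> inv (A \<otimes> x \<otimes> B) \<otimes> u"
        using h x True by (simp add: core_op_def)
      also have "\<dots> = (u \<otimes> inv B) \<otimes> inv x \<otimes> (inv A \<otimes> u)"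
        using A B x u by (simp add: inv_mult_group m_assoc)
      finally show "foldl (core_op G) x (us @ [u]) = (if even (length (us @ [u])) then (u \<otimes> inv B) \<otimes> x \<otimes> (inv A \<otimes> u) else (u \<otimes> inv B) \<otimes> inv x \<otimes> (inv A \<otimes> u))"
        using True by simp
    qed (use A B u in auto)
  next
    case False
    show ?thesis
    proof (rule bexI[of _ "u \<otimes> inv B"], rule bexI[of _ "inv A \<otimes> u"], intro ballI)
      fix x assume x: "x \<in> carrier G"
      have "foldl (core_op G) x (us @ [u]) = u \<otimes> inv (A \<otimes> inv x \<otimes> B) \<otimes> u"
        using h x False by (simp add: core_op_def)
      also have "\<dots> = (u \<otimes> inv B) \<otimes> x \<otimes> (inv A \<otimes> u)"
        using A B x u by (simp add: inv_mult_group m_assoc)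
      finally show "foldl (core_op G) x (us @ [u]) = (if even (length (us @ [u])) then (u \<otimes> inv B) \<otimes> x \<otimes> (inv A \<otimes> u) else (u \<otimes> inv B) \<otimes> inv x \<otimes> (inv A \<otimes> u))"
        using False by simp
    qed (use A B u in auto)
  qed
qed

lemma (in group) forward:
  assumes A: "A \<in> carrier G" and B: "B \<in> carrier G"
    and h: "\<forall>x\<in>carrier G. A \<otimes> inv x \<otimes> B = x"
  shows "\<forall>g\<in>carrier G. g \<otimes> g = \<one>"
proof -
  have "A \<otimes> B = \<one>" using h[rule_format, of \<one>] A B by simp
  then have Bi: "B = inv A" using A B by (metis inv_equality l_cancel_one' r_inv one_closed inv_closed m_closed comm_group_def)
  have conj: "inv x = inv A \<otimes> x \<otimes> A" if x: "x \<in> carrier G" for x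
  proof -
    have e: "A \<otimes> inv x \<otimes> inv A = x" using h x Bi by auto
    have "inv A \<otimes> (A \<otimes> inv x \<otimes> inv A) \<otimes> A = inv x" using A x by (simp add: m_assoc flip: m_assoc[of "inv A" A])
    then show ?thesis using e by simp
  qed
  have comm: "a \<otimes> b = b \<otimes> a" if a: "a \<in> carrier G" and b: "b \<in> carrier G" for a b
  proof -
    have "inv b \<otimes> inv a = inv (a \<otimes> b)" using a b by (simp add: inv_mult_group)
    also have "\<dots> = inv A \<otimes> (a \<otimes> b) \<otimes> A" using conj a b by simp
    also have "\<dots> = (inv A \<otimes> a \<otimes> A) \<otimes> (inv A \<otimes> b \<otimes> A)" using a b A by (simp add: m_assoc flip: m_assoc[of A "inv A"])
    also have "\<dots> = inv a \<otimes> inv b" using conj a b by simp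
    finally have "inv b \<otimes> inv a = inv a \<otimes> inv b" .
    then have "inv (inv b \<otimes> inv a) = inv (inv a \<otimes> inv b)" by simp
    then show ?thesis using a b by (simp add: inv_mult_group)
  qed
  show ?thesis
  proof
    fix g assume g: "g \<in> carrier G"
    have "inv g = inv A \<otimes> g \<otimes> A" using conj g by simp
    also have "\<dots> = g" using comm A g by (metis inv_closed l_inv m_assoc r_one)
    finally have "inv g = g" .
    then show "g \<otimes> g = \<one>" using g by (metis r_inv)
  qed
qed

lemma (in group) main_loc:
  shows "core_n_stable G (2 * k + 1) \<longleftrightarrow> (\<forall>g\<in>carrier G. g \<otimes> g = \<one>)"
proof
  assume "core_n_stable G (2 * k + 1)"
  then obtain us where us: "length us = 2*k+1" "set us \<subseteq> carrier G"
    "\<forall>x\<in>carrier G. foldl (core_op G) x us = x"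
    unfolding core_n_stable_def n_stable_def stabilizing_family_def rack_iter_def by blast
  obtain A B where AB: "A \<in> carrier G" "B \<in> carrier G" and h: "\<forall>x\<in>carrier G.
     foldl (core_op G) x us = (if even (length us) then A \<otimes> x \<otimes> B else A \<otimes> inv x \<otimes> B)"
    using fold_form[OF us(2)] by blast
  have "\<forall>x\<in>carrier G. A \<otimes> inv x \<otimes> B = x" using h us(1,3) by auto
  then show "\<forall>g\<in>carrier G. g \<otimes> g = \<one>" using forward AB by blast
next
  assume sq: "\<forall>g\<in>carrier G. g \<otimes> g = \<one>"
  have inv_self: "inv g = g" if "g \<in> carrier G" for g
    using sq that by (metis inv_equality)
  have step: "core_op G x \<one> = x" if "x \<in> carrier G" for x
    using that inv_self by (simp add: core_op_def)
  have rep: "\<forall>x\<in>carrier G. foldl (core_op G) x (replicate n \<one>) = x" for n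
    by (induction n) (auto simp: step)
  then show "core_n_stable G (2 * k + 1)"
    unfolding core_n_stable_def n_stable_def stabilizing_family_def rack_iter_def
    using rep by (intro exI[of _ "replicate (2*k+1) \<one>"]) (simp del: replicate.simps)
qed


theorem mainTheorem2:
  fixes G :: "('a, 'b) monoid_scheme" and k :: nat
  assumes "group G"
  shows "core_n_stable G (2 * k + 1) \<longleftrightarrow> (\<forall>g\<in>carrier G. g \<otimes>\<^bsub>G\<^esub> g = \<one>\<^bsub>G\<^esub>)"
  using group.main_loc[OF assms] .

end
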